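(* In the multi-agent combinatorial-actions contract model (described in the context) with an XOS reward function $f$ and $n$ agents, for any contract $\boldsymbol{\alpha}^\star$ and any pure Nash equilibrium $S^\star$ of $\boldsymbol{\alpha}^\star$, there exists an equal-pay contract $\boldsymbol{\alpha}$ and a pure Nash equilibrium $S$ of $\boldsymbol{\alpha}$ such that $$\Big(1-\sum_{i\in A}\alpha_i\Big)f(S)\ \ge\ \Omega\!\left(\frac{\log\log n}{\log n}\right)\Big(1-\sum_{i\in A}\alpha^\star_i\Big)f(S^\star).$$
   Context: Model: principal and agents $A=[n]$; each agent $i$ has a finite action set $T_i$ (pairwise disjoint), $T=\bigsqcup_iT_i$, costs $c_j\ge0$, $c(S_i)=\sum_{j\in S_i}c_j$. Reward $f:2^T\to[0,1]$ monotone, $f(\emptyset)=0$; $f$ is XOS if $f(S)=\max_{\ell\in\mathcal{L}}\ell(S)$ for a finite family $\mathcal{L}$ of additive functions. Contract $\boldsymbol{\alpha}\in[0,1]^A$; agent $i$'s utility $\alpha_if(S)-c(S\cap T_i)$; $S$ is a pure Nash equilibrium of $\boldsymbol{\alpha}$ if no agent can gain by changing her own subset of actions. A contract is equal-pay if all its nonzero entries are equal. The $\Omega(\cdot)$ hides a universal constant. *)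

theory Defs
  imports Complex_Main
begin

text \<open>Instance: agents are 0..n-1; actions are natural numbers in the finite set T;
  own j is the agent owning action j, so T_i = {j in T. own j = i}.\<close>

definition actions_of :: "nat set \<Rightarrow> (nat \<Rightarrow> nat) \<Rightarrow> nat \<Rightarrow> nat set" where
  "actions_of T own i = {j \<in> T. own j = i}"

definition cost :: "(nat \<Rightarrow> real) \<Rightarrow> nat set \<Rightarrow> real" where
  "cost c S = (\<Sum>j\<in>S. c j)"

definition valid_instance ::
  "nat \<Rightarrow> nat set \<Rightarrow> (nat \<Rightarrow> nat) \<Rightarrow> (nat \<Rightarrow> real) \<Rightarrow> bool" where
  "valid_instance n T own c \<longleftrightarrow> finite T \<and> (\<forall>j\<in>T. own j < n) \<and> (\<forall>j\<in>T. c j \<ge> 0)"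

definition valid_reward :: "nat set \<Rightarrow> (nat set \<Rightarrow> real) \<Rightarrow> bool" where
  "valid_reward T f \<longleftrightarrow> f {} = 0 \<and>
     (\<forall>S\<subseteq>T. 0 \<le> f S \<and> f S \<le> 1) \<and>
     (\<forall>S U. S \<subseteq> U \<and> U \<subseteq> T \<longrightarrow> f S \<le> f U)"

definition XOS :: "nat set \<Rightarrow> (nat set \<Rightarrow> real) \<Rightarrow> bool" where
  "XOS T f \<longleftrightarrow> (\<exists>L :: (nat \<Rightarrow> real) set. finite L \<and> L \<noteq> {} \<and>
     (\<forall>w\<in>L. \<forall>j\<in>T. w j \<ge> 0) \<and>
     (\<forall>S\<subseteq>T. f S = Max ((\<lambda>w. \<Sum>j\<in>S. w j) ` L)))"

definition contract :: "nat \<Rightarrow> (nat \<Rightarrow> real) \<Rightarrow> bool" where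
  "contract n \<alpha> \<longleftrightarrow> (\<forall>i<n. 0 \<le> \<alpha> i \<and> \<alpha> i \<le> 1)"

definition equal_pay :: "nat \<Rightarrow> (nat \<Rightarrow> real) \<Rightarrow> bool" where
  "equal_pay n \<alpha> \<longleftrightarrow> (\<forall>i<n. \<forall>k<n. \<alpha> i \<noteq> 0 \<longrightarrow> \<alpha> k \<noteq> 0 \<longrightarrow> \<alpha> i = \<alpha> k)"

definition utility ::
  "nat set \<Rightarrow> (nat \<Rightarrow> nat) \<Rightarrow> (nat \<Rightarrow> real) \<Rightarrow> (nat set \<Rightarrow> real) \<Rightarrow> (nat \<Rightarrow> real)
   \<Rightarrow> nat \<Rightarrow> nat set \<Rightarrow> real" where
  "utility T own c f \<alpha> i S = \<alpha> i * f S - cost c (S \<inter> actions_of T own i)"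

definition pure_NE ::
  "nat \<Rightarrow> nat set \<Rightarrow> (nat \<Rightarrow> nat) \<Rightarrow> (nat \<Rightarrow> real) \<Rightarrow> (nat set \<Rightarrow> real) \<Rightarrow> (nat \<Rightarrow> real)
   \<Rightarrow> nat set \<Rightarrow> bool" where
  "pure_NE n T own c f \<alpha> S \<longleftrightarrow> S \<subseteq> T \<and>
     (\<forall>i<n. \<forall>S'\<subseteq>actions_of T own i.
        utility T own c f \<alpha> i ((S - actions_of T own i) \<union> S') \<le> utility T own c f \<alpha> i S)"

definition principal_utility :: "nat \<Rightarrow> (nat set \<Rightarrow> real) \<Rightarrow> (nat \<Rightarrow> real) \<Rightarrow> nat set \<Rightarrow> real" where
  "principal_utility n f \<alpha> S = (1 - (\<Sum>i<n. \<alpha> i)) * f S"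

end

theory Submission
  imports Defs
begin


lemma avg_subset_aux:
  fixes x :: "'a \<Rightarrow> real"
  shows "finite P \<Longrightarrow> (\<forall>j\<in>P. 0 \<le> x j) \<Longrightarrow> card P = m + k \<Longrightarrow>
    \<exists>B \<subseteq> P. card B \<le> m \<and> real m * sum x P \<le> real (card P) * sum x B"
proof (induction k arbitrary: P)
  case 0
  then show ?case by (intro exI[of _ P]) auto
next
  case (Suc k)
  then have Pne: "P \<noteq> {}" by auto
  obtain e where e: "e \<in> P" "x e = Min (x ` P)"
  proof -
    have "Min (x ` P) \<in> x ` P" using Suc.prems Pne by (intro Min_in) auto
    then show ?thesis using that by auto
  qed
  have emin: "\<forall>j\<in>P. x e \<le> x j" using e Suc.prems by auto
  define P' where "P' = P - {e}"
  have cP': "card P' = m + k" using Suc.prems e by (simp add: P'_def)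
  have finP': "finite P'" using Suc.prems by (simp add: P'_def)
  obtain B where B: "B \<subseteq> P'" "card B \<le> m" "real m * sum x P' \<le> real (card P') * sum x B"
    using Suc.IH[OF finP' _ cP'] Suc.prems by (auto simp: P'_def)
  have sP: "sum x P = sum x P' + x e"
    using Suc.prems e by (simp add: P'_def sum.remove)
  have low: "real (card P') * x e \<le> sum x P'"
    using sum_bounded_below[of P' "x e" x] emin by (auto simp: P'_def)
  have B0: "0 \<le> sum x B" using B Suc.prems by (intro sum_nonneg) (auto simp: P'_def)
  have cP: "card P = m + k + 1" using Suc.prems by simp
  show ?case
  proof (cases "m + k = 0")
    case True
    then have "m = 0" by simp
    then show ?thesis using B B0 by (intro exI[of _ B]) (auto simp: P'_def)
  next
    case False
    then have pos: "(0::real) < real (m + k)" by (simp only: of_nat_0_less_iff)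
    have "real (m+k) * sum x P \<le> real (m + k + 1) * sum x P'"
      using sP low cP' by (simp add: algebra_simps)
    then have "real m * (real (m+k) * sum x P) \<le> real m * (real (m + k + 1) * sum x P')"
      by (intro mult_left_mono) auto
    also have "\<dots> = real (m+k+1) * (real m * sum x P')" by (simp add: algebra_simps)
    also have "\<dots> \<le> real (m+k+1) * (real (m+k) * sum x B)"
      using B cP' by (intro mult_left_mono) auto
    finally have "real (m+k) * (real m * sum x P) \<le> real (m+k) * (real (m+k+1) * sum x B)"
      by (simp add: algebra_simps)
    then have "real m * sum x P \<le> real (m+k+1) * sum x B"
      using pos by (simp add: mult_le_cancel_left)
    then show ?thesis using B cP by (intro exI[of _ B]) (auto simp: P'_def)
  qed
qed

lemma avg_subset:
  fixes x :: "'a \<Rightarrow> real"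
  assumes "finite P" "\<forall>j\<in>P. 0 \<le> x j" "m \<le> card P"
  shows "\<exists>B \<subseteq> P. card B \<le> m \<and> real m * sum x P \<le> real (card P) * sum x B"
  using avg_subset_aux[OF assms(1,2), of m "card P - m"] assms(3) by simp

lemma choose_sub:
  fixes x :: "'a \<Rightarrow> real"
  assumes fin: "finite P" and xn: "\<forall>j\<in>P. 0 \<le> x j" and m: "m > 0" and wt: "1 \<le> wt"
    and cP: "real (card P) \<le> real m * wt"
  shows "\<exists>B \<subseteq> P. card B \<le> m \<and> sum x P \<le> wt * sum x B"
proof (cases "card P \<le> m")
  case True
  have "sum x P \<le> wt * sum x P"
    using wt sum_nonneg[of P x] xn by (simp add: mult_le_cancel_right1)
  then show ?thesis using True by blast
next
  case False
  obtain B where B: "B \<subseteq> P" "card B \<le> m" "real m * sum x P \<le> real (card P) * sum x B"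
    using avg_subset[OF fin xn, of m] False by auto
  have B0: "0 \<le> sum x B" using B xn by (intro sum_nonneg) auto
  have "real (card P) * sum x B \<le> (real m * wt) * sum x B" using cP B0 by (intro mult_right_mono)
  with B have "real m * sum x P \<le> real m * (wt * sum x B)" by (simp add: algebra_simps)
  then have "sum x P \<le> wt * sum x B" using m by simp
  then show ?thesis using B by blast
qed

lemma comb:
  fixes \<beta> x :: "nat \<Rightarrow> real" and Os :: "nat set" and \<theta> bc :: nat
  assumes fin: "finite Os" and th: "\<theta> \<ge> 2" and cO: "card Os \<le> \<theta>^bc"
    and bO: "\<forall>j\<in>Os. 0 \<le> \<beta> j \<and> \<beta> j \<le> 1/2" and sb: "sum \<beta> Os \<le> 1"
    and xO: "\<forall>j\<in>Os. 0 \<le> x j"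
  shows "\<exists>B b. B \<subseteq> Os \<and> card B \<le> \<theta>^b \<and> (\<forall>j\<in>B. \<beta> j * (2 * real \<theta>^b) \<le> 1) \<and>
           sum x Os \<le> (real bc + 1 + 2 * real \<theta>) * sum x B"
proof -
  define blk where "blk j = (LEAST b. b = bc \<or> 1 < \<beta> j * (2 * real \<theta>^(b+1)))" for j
  have ex: "\<exists>b. b = bc \<or> 1 < \<beta> j * (2 * real \<theta>^(b+1))" for j by blast
  have blk_le: "blk j \<le> bc" for j unfolding blk_def by (rule Least_le) simp
  have blk_low: "1 < \<beta> j * (2 * real \<theta>^(blk j+1))" if "blk j < bc" for j
    using LeastI_ex[OF ex[of j]] that unfolding blk_def by auto
  have blk_up: "\<beta> j * (2 * real \<theta>^(blk j)) \<le> 1" if j: "j \<in> Os" for j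
  proof (cases "blk j = 0")
    case True
    then show ?thesis using bO j by auto
  next
    case False
    define b' where "b' = blk j - 1"
    have "b' < blk j" using False by (simp add: b'_def)
    then have "\<not> (b' = bc \<or> 1 < \<beta> j * (2 * real \<theta>^(b'+1)))"
      unfolding blk_def by (rule not_less_Least)
    moreover have "b' + 1 = blk j" using False by (simp add: b'_def)
    ultimately show ?thesis by (metis not_less)
  qed
  define P where "P b = {j\<in>Os. blk j = b}" for b
  define M where "M b = sum \<beta> (P b)" for b
  define wt where "wt b = 1 + 2 * real \<theta> * M b" for b
  have finP: "finite (P b)" for b using fin by (simp add: P_def)
  have M0: "0 \<le> M b" for b unfolding M_def P_def using bO by (intro sum_nonneg) auto
  have wt1: "1 \<le> wt b" for b using M0[of b] by (simp add: wt_def)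
  have thp: "(0::real) < real \<theta>^b" for b using th by simp
  have th1: "(1::real) \<le> real \<theta>^b" for b using th by (simp add: one_le_power)
  have cardP: "real (card (P b)) \<le> real (\<theta>^b) * wt b" if b: "b \<le> bc" for b
  proof (cases "b = bc")
    case True
    have "card (P b) \<le> card Os" using fin by (intro card_mono) (auto simp: P_def)
    then have "card (P b) \<le> \<theta>^b" using cO True by simp
    then have "real (card (P b)) \<le> real (\<theta>^b)" by (simp only: of_nat_le_iff)
    also have "\<dots> \<le> real (\<theta>^b) * wt b" using wt1[of b] by (simp add: mult_le_cancel_left1)
    finally show ?thesis .
  next
    case False
    then have lt: "b < bc" using b by simp
    have "real (card (P b)) = (\<Sum>j\<in>P b. 1)" by simp
    also have "\<dots> \<le> (\<Sum>j\<in>P b. \<beta> j * (2 * real \<theta>^(b+1)))"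
      using blk_low lt by (intro sum_mono) (auto simp: P_def intro: less_imp_le)
    also have "\<dots> = real \<theta>^b * (2 * real \<theta> * M b)"
      by (simp add: M_def sum_distrib_right sum_distrib_left algebra_simps)
    also have "\<dots> \<le> real (\<theta>^b) * wt b" unfolding wt_def using thp[of b] by (simp add: mult_le_cancel_left)
    finally show ?thesis .
  qed
  have pick: "\<exists>B. B \<subseteq> P b \<and> card B \<le> \<theta>^b \<and> sum x (P b) \<le> wt b * sum x B" if "b \<le> bc" for b
    using choose_sub[OF finP[of b], where x=x and m="\<theta>^b" and wt="wt b"] xO wt1 cardP[OF that] th
    by (auto simp: P_def)
  then obtain Bf where Bf: "\<And>b. b \<le> bc \<Longrightarrow> Bf b \<subseteq> P b \<and> card (Bf b) \<le> \<theta>^b \<and> sum x (P b) \<le> wt b * sum x (Bf b)"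
    by metis
  define W where "W = (\<Sum>b\<le>bc. wt b)"
  have sumM: "(\<Sum>b\<le>bc. M b) = sum \<beta> Os"
    unfolding M_def P_def using fin blk_le by (intro sum.group) auto
  have sumP: "(\<Sum>b\<le>bc. sum x (P b)) = sum x Os"
    unfolding P_def using fin blk_le by (intro sum.group) auto
  have "W = (\<Sum>b\<le>bc. 1) + 2 * real \<theta> * (\<Sum>b\<le>bc. M b)"
    by (simp add: W_def wt_def sum.distrib sum_distrib_left)
  then have W: "W = real bc + 1 + 2 * real \<theta> * sum \<beta> Os" using sumM by simp
  have W0: "0 \<le> W" using W bO by (simp add: sum_nonneg)
  have "real \<theta> * sum \<beta> Os \<le> real \<theta> * 1" using sb by (intro mult_left_mono) auto
  then have WK: "W \<le> real bc + 1 + 2 * real \<theta>" using W by simp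
  have xB0: "0 \<le> sum x (Bf b)" if "b \<le> bc" for b
    using Bf[OF that] xO by (intro sum_nonneg) (auto simp: P_def)
  have "\<exists>b\<le>bc. sum x Os \<le> W * sum x (Bf b)"
  proof (rule ccontr)
    assume "\<not> ?thesis"
    then have lt: "\<forall>b\<le>bc. W * sum x (Bf b) < sum x Os" by auto
    have "W * sum x Os = (\<Sum>b\<le>bc. W * sum x (P b))" using sumP by (metis sum_distrib_left)
    also have "\<dots> < (\<Sum>b\<le>bc. wt b * sum x Os)"
    proof (rule sum_strict_mono)
      fix b assume "b \<in> {..bc}"
      then have b: "b \<le> bc" by simp
      have "W * sum x (P b) \<le> W * (wt b * sum x (Bf b))" using Bf[OF b] W0 by (intro mult_left_mono) auto
      also have "\<dots> = wt b * (W * sum x (Bf b))" by simp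
      also have "\<dots> < wt b * sum x Os" using lt b wt1[of b] by (intro mult_strict_left_mono) auto
      finally show "W * sum x (P b) < wt b * sum x Os" .
    qed auto
    also have "\<dots> = W * sum x Os" by (simp add: W_def sum_distrib_right)
    finally show False by simp
  qed
  then obtain b where b: "b \<le> bc" "sum x Os \<le> W * sum x (Bf b)" by blast
  have "W * sum x (Bf b) \<le> (real bc + 1 + 2 * real \<theta>) * sum x (Bf b)"
    using WK xB0[OF b(1)] by (intro mult_right_mono)
  moreover have "Bf b \<subseteq> Os" using Bf[OF b(1)] by (auto simp: P_def)
  moreover have "\<forall>j\<in>Bf b. \<beta> j * (2 * real \<theta>^b) \<le> 1"
    using Bf[OF b(1)] blk_up by (auto simp: P_def)
  ultimately show ?thesis using b Bf[OF b(1)] by fastforce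
qed



lemma asym:
  fixes n :: nat
  assumes n: "exp 16 \<le> real n"
  shows "nat \<lfloor>sqrt (ln (real n))\<rfloor> \<ge> 2 \<and>
    n \<le> (nat \<lfloor>sqrt (ln (real n))\<rfloor>) ^ (nat \<lceil>ln (real n) / ln (real (nat \<lfloor>sqrt (ln (real n))\<rfloor>))\<rceil>) \<and>
    real (nat \<lceil>ln (real n) / ln (real (nat \<lfloor>sqrt (ln (real n))\<rfloor>))\<rceil>) + 1 + 2 * real (nat \<lfloor>sqrt (ln (real n))\<rfloor>)
      \<le> 10 * ln (real n) / ln (ln (real n))"
proof -
  define lam where "lam = ln (real n)"
  define s where "s = sqrt lam"
  define \<theta> where "\<theta> = nat \<lfloor>s\<rfloor>"
  define bc where "bc = nat \<lceil>lam / ln (real \<theta>)\<rceil>"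
  have npos: "0 < real n" using n by (smt (verit) exp_gt_zero)
  have lam16: "16 \<le> lam" unfolding lam_def using n npos
    by (metis ln_exp ln_le_cancel_iff exp_gt_zero)
  have s4: "4 \<le> s" unfolding s_def using real_sqrt_le_mono[OF lam16] by simp
  have s2: "s * s = lam" unfolding s_def using lam16 by simp
  have thr: "real \<theta> = of_int \<lfloor>s\<rfloor>" unfolding \<theta>_def using s4 by simp
  have th_le: "real \<theta> \<le> s" using thr by simp
  have th_ge: "s - 1 \<le> real \<theta>" using thr by linarith
  have th2: "\<theta> \<ge> 2" using th_ge s4 by linarith
  have th_half: "s / 2 \<le> real \<theta>" using th_ge s4 by linarith
  have lns: "ln s = ln lam / 2" unfolding s_def using lam16 by (simp add: ln_sqrt)
  have ln16: "ln (16::real) = 4 * ln 2"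
  proof -
    have "(16::real) = 2^4" by simp
    then show ?thesis by (metis ln_realpow zero_less_numeral of_nat_numeral)
  qed
  have lnlam: "4 * ln 2 \<le> ln lam" using lam16 ln16 by (metis ln_le_cancel_iff zero_less_numeral less_le_trans)
  have "ln (s/2) \<le> ln (real \<theta>)" using th_half s4 by (intro ln_mono) auto
  moreover have "ln (s/2) = ln s - ln 2" using s4 by (simp add: ln_div)
  ultimately have lnth: "ln lam / 4 \<le> ln (real \<theta>)" using lns lnlam by linarith
  have lnlam_pos: "0 < ln lam" using lnlam by (smt (verit) ln_gt_zero_iff)
  have lnth_pos: "0 < ln (real \<theta>)" using lnth lnlam_pos by linarith
  have bc_ge: "lam / ln (real \<theta>) \<le> real bc" unfolding bc_def by linarith
  have bc_le: "real bc \<le> lam / ln (real \<theta>) + 1"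
    unfolding bc_def using lam16 lnth_pos by (simp add: of_nat_nat ceiling_le_iff) linarith?
  have "lam \<le> real bc * ln (real \<theta>)" using bc_ge lnth_pos by (simp add: divide_le_eq)
  then have "exp lam \<le> exp (real bc * ln (real \<theta>))" by simp
  also have "\<dots> = real \<theta> ^ bc" using th2 by (simp add: exp_of_nat_mult)
  finally have "real n \<le> real (\<theta> ^ bc)" using npos by (simp add: lam_def)
  then have nle: "n \<le> \<theta> ^ bc" by (simp only: of_nat_le_iff)
  have "lam / ln (real \<theta>) \<le> lam / (ln lam / 4)"
    using lnth lnlam_pos lnth_pos lam16 by (intro divide_left_mono) auto
  then have bc2: "real bc \<le> 4 * lam / ln lam + 1" using bc_le by (simp add: mult.commute)
  have "ln s \<le> s - 1" using s4 by (intro ln_le_minus_one) auto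
  then have "ln lam \<le> 2 * s" using lns by linarith
  then have "s * ln lam \<le> s * (2 * s)" using s4 by (intro mult_left_mono) auto
  then have "s * ln lam \<le> 2 * lam" using s2 by simp
  then have sb: "s \<le> 2 * lam / ln lam" using lnlam_pos by (simp add: le_divide_eq)
  have "real bc + 1 + 2 * real \<theta> \<le> 4 * lam / ln lam + 2 + 2 * s" using bc2 th_le by linarith
  also have "\<dots> \<le> 4 * lam / ln lam + 3 * s" using s4 by linarith
  also have "\<dots> \<le> 4 * lam / ln lam + 6 * lam / ln lam" using sb by linarith
  also have "\<dots> = 10 * lam / ln lam" by (simp add: add_divide_distrib[symmetric])
  finally have fin: "real bc + 1 + 2 * real \<theta> \<le> 10 * lam / ln lam" .
  show ?thesis using th2 nle fin unfolding lam_def s_def \<theta>_def bc_def by simp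
qed



lemma potential:
  assumes vi: "valid_instance n T own c" and vr: "valid_reward T f"
    and B: "B \<subseteq> {..<n}" and a0: "0 \<le> a" and a1: "a \<le> 1"
  shows "\<exists>S. S \<subseteq> {j\<in>T. own j \<in> B} \<and> pure_NE n T own c f (\<lambda>i. if i\<in>B then a else 0) S \<and>
     (\<forall>D \<subseteq> {j\<in>T. own j \<in> B}. a * f D - cost c D \<le> a * f S - cost c S)"
proof -
  define TB where "TB = {j\<in>T. own j \<in> B}"
  define \<Phi> where "\<Phi> D = a * f D - cost c D" for D
  have finT: "finite T" using vi by (simp add: valid_instance_def)
  have cnn: "\<forall>j\<in>T. c j \<ge> 0" using vi by (simp add: valid_instance_def)
  have finTB: "finite TB" using finT by (simp add: TB_def)
  have fin: "finite (\<Phi> ` Pow TB)" using finTB by simp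
  have ne: "\<Phi> ` Pow TB \<noteq> {}" by auto
  obtain S where S: "S \<in> Pow TB" "\<Phi> S = Max (\<Phi> ` Pow TB)"
    using Max_in[OF fin ne] by auto
  have max: "\<Phi> D \<le> \<Phi> S" if "D \<subseteq> TB" for D
    using Max_ge[OF fin] that S by auto
  have STB: "S \<subseteq> TB" using S by auto
  have ST: "S \<subseteq> T" using STB by (auto simp: TB_def)
  have NE: "pure_NE n T own c f (\<lambda>i. if i\<in>B then a else 0) S"
    unfolding pure_NE_def
  proof (intro conjI allI impI)
    show "S \<subseteq> T" by fact
    fix i S' assume i: "i < n" and S': "S' \<subseteq> actions_of T own i"
    define S2 where "S2 = (S - actions_of T own i) \<union> S'"
    have S2i: "S2 \<inter> actions_of T own i = S'" using S' by (auto simp: S2_def)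
    have S'T: "S' \<subseteq> T" using S' by (auto simp: actions_of_def)
    have finS': "finite S'" using S'T finT finite_subset by blast
    have cS': "cost c S' \<ge> 0" unfolding cost_def using S'T cnn by (intro sum_nonneg) auto
    show "utility T own c f (\<lambda>i. if i \<in> B then a else 0) i S2
        \<le> utility T own c f (\<lambda>i. if i \<in> B then a else 0) i S"
    proof (cases "i \<in> B")
      case True
      have S2TB: "S2 \<subseteq> TB" using STB S' True by (auto simp: S2_def TB_def actions_of_def)
      have finS: "finite S" using ST finT finite_subset by blast
      have c1: "cost c S2 = cost c (S - actions_of T own i) + cost c S'"
        unfolding cost_def S2_def
        using S' finS finS' by (intro sum.union_disjoint) auto
      have c2: "cost c S = cost c (S - actions_of T own i) + cost c (S \<inter> actions_of T own i)"
      proof -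
        have e: "S - (S \<inter> actions_of T own i) = S - actions_of T own i" by blast
        show ?thesis unfolding cost_def
          using sum.subset_diff[of "S \<inter> actions_of T own i" S c] finS e by simp
      qed
      have "\<Phi> S2 \<le> \<Phi> S" using max S2TB by blast
      then show ?thesis using True c1 c2 S2i
        by (simp add: utility_def \<Phi>_def)
    next
      case False
      have "S \<inter> actions_of T own i = {}" using STB False by (auto simp: TB_def actions_of_def)
      then show ?thesis using False S2i cS' by (simp add: utility_def cost_def)
    qed
  qed
  show ?thesis using STB NE max unfolding TB_def \<Phi>_def by blast
qed

lemma sum_own:
  assumes "finite A" "finite B"
  shows "(\<Sum>i\<in>B. sum h {j\<in>A. own j = i}) = sum h {j\<in>A. own j \<in> B}"
proof -
  have "(\<Sum>i\<in>B. sum h {j\<in>{j\<in>A. own j \<in> B}. own j = i}) = sum h {j\<in>A. own j \<in> B}"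
    using assms by (intro sum.group) auto
  moreover have "sum h {j\<in>{j\<in>A. own j \<in> B}. own j = i} = sum h {j\<in>A. own j = i}" if "i \<in> B" for i
    using that by (intro sum.cong) auto
  ultimately show ?thesis by simp
qed

locale inst =
  fixes n :: nat and T :: "nat set" and own :: "nat \<Rightarrow> nat" and c :: "nat \<Rightarrow> real"
    and f :: "nat set \<Rightarrow> real" and \<beta> :: "nat \<Rightarrow> real" and Ss :: "nat set" and w :: "nat \<Rightarrow> real"
  assumes vi: "valid_instance n T own c" and vr: "valid_reward T f"
    and ctr: "contract n \<beta>" and ne: "pure_NE n T own c f \<beta> Ss"
    and wnn: "\<forall>j\<in>T. 0 \<le> w j" and wle: "\<forall>S\<subseteq>T. sum w S \<le> f S" and weq: "f Ss = sum w Ss"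
begin

definition x :: "nat \<Rightarrow> real" where "x i = sum w {j\<in>Ss. own j = i}"

lemma finT: "finite T" using vi by (simp add: valid_instance_def)
lemma SsT: "Ss \<subseteq> T" using ne by (simp add: pure_NE_def)
lemma finSs: "finite Ss" using SsT finT finite_subset by blast
lemma own_lt: "j \<in> T \<Longrightarrow> own j < n" using vi by (simp add: valid_instance_def)
lemma cnn: "j \<in> T \<Longrightarrow> 0 \<le> c j" using vi by (simp add: valid_instance_def)
lemma fmono: "S \<subseteq> U \<Longrightarrow> U \<subseteq> T \<Longrightarrow> f S \<le> f U" using vr by (simp add: valid_reward_def)
lemma fnn: "S \<subseteq> T \<Longrightarrow> 0 \<le> f S" using vr by (simp add: valid_reward_def)
lemma f1: "S \<subseteq> T \<Longrightarrow> f S \<le> 1" using vr by (simp add: valid_reward_def)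
lemma bnn: "i < n \<Longrightarrow> 0 \<le> \<beta> i" using ctr by (simp add: contract_def)

lemma sum_x: "finite B \<Longrightarrow> sum x B = sum w {j\<in>Ss. own j \<in> B}"
  unfolding x_def using sum_own finSs by blast

lemma x_nonneg: "0 \<le> x i"
  unfolding x_def using wnn SsT by (intro sum_nonneg) auto

lemma V: "f Ss = sum x {..<n}"
proof -
  have "{j\<in>Ss. own j \<in> {..<n}} = Ss" using SsT own_lt by auto
  then show ?thesis using sum_x[of "{..<n}"] weq by simp
qed

lemma cost_i:
  assumes i: "i < n"
  shows "cost c {j\<in>Ss. own j = i} \<le> \<beta> i * x i"
proof -
  have "utility T own c f \<beta> i ((Ss - actions_of T own i) \<union> {}) \<le> utility T own c f \<beta> i Ss"
    using ne i unfolding pure_NE_def by blast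
  moreover have "Ss \<inter> actions_of T own i = {j\<in>Ss. own j = i}" using SsT by (auto simp: actions_of_def)
  moreover have "(Ss - actions_of T own i) \<inter> actions_of T own i = {}" by blast
  ultimately have u: "\<beta> i * f (Ss - actions_of T own i) \<le> \<beta> i * f Ss - cost c {j\<in>Ss. own j = i}"
    by (simp add: utility_def cost_def)
  have e: "Ss - actions_of T own i = Ss - {j\<in>Ss. own j = i}" using SsT by (auto simp: actions_of_def)
  have "sum w (Ss - {j\<in>Ss. own j = i}) = sum w Ss - x i"
    unfolding x_def using finSs by (intro sum_diff) auto
  moreover have "sum w (Ss - {j\<in>Ss. own j = i}) \<le> f (Ss - {j\<in>Ss. own j = i})"
    using wle SsT by (meson Diff_subset order_trans)
  ultimately have "f Ss - x i \<le> f (Ss - actions_of T own i)" using e weq by simp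
  then have "\<beta> i * (f Ss - x i) \<le> \<beta> i * f (Ss - actions_of T own i)"
    using bnn[OF i] by (intro mult_left_mono) auto
  with u show ?thesis by (simp add: algebra_simps)
qed


lemma sum_alpha:
  assumes "B \<subseteq> {..<n}"
  shows "(\<Sum>i<n. (if i \<in> B then a else 0)) = a * real (card B)"
proof -
  have "(\<Sum>i<n. (if i \<in> B then a else 0)) = (\<Sum>i\<in>{..<n} \<inter> B. a)"
    by (simp add: sum.If_cases)
  also have "{..<n} \<inter> B = B" using assms by blast
  finally show ?thesis by simp
qed

lemma good_option:
  fixes a \<gamma> :: real
  assumes B: "B \<subseteq> {..<n}" and a0: "0 < a" and a1: "a \<le> 1" and aB: "a * card B \<le> 3/4"
    and bg: "\<forall>i\<in>B. \<beta> i \<le> \<gamma>" and g: "\<gamma> \<le> 2*a/3"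
  shows "\<exists>\<alpha> S. contract n \<alpha> \<and> equal_pay n \<alpha> \<and> pure_NE n T own c f \<alpha> S \<and>
           sum x B / 12 \<le> principal_utility n f \<alpha> S"
proof -
  obtain S where S: "S \<subseteq> {j\<in>T. own j \<in> B}" and NE: "pure_NE n T own c f (\<lambda>i. if i\<in>B then a else 0) S"
    and mx: "\<forall>D \<subseteq> {j\<in>T. own j \<in> B}. a * f D - cost c D \<le> a * f S - cost c S"
    using potential[OF vi vr B, of a] a0 a1 by auto
  define D where "D = {j\<in>Ss. own j \<in> B}"
  have finB: "finite B" using B finite_subset by blast
  have DT: "D \<subseteq> {j\<in>T. own j \<in> B}" using SsT by (auto simp: D_def)
  have 1: "a * f D - cost c D \<le> a * f S - cost c S" using mx DT by blast
  have 2: "sum x B \<le> f D" using sum_x[OF finB] wle DT unfolding D_def by auto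
  have "cost c D = (\<Sum>i\<in>B. cost c {j\<in>Ss. own j = i})"
    unfolding cost_def D_def using sum_own[OF finSs finB, of c own] by simp
  also have "\<dots> \<le> (\<Sum>i\<in>B. \<gamma> * x i)"
  proof (rule sum_mono)
    fix i assume i: "i \<in> B"
    have "cost c {j\<in>Ss. own j = i} \<le> \<beta> i * x i" using cost_i i B by auto
    also have "\<dots> \<le> \<gamma> * x i" using bg i x_nonneg by (intro mult_right_mono) auto
    finally show "cost c {j\<in>Ss. own j = i} \<le> \<gamma> * x i" .
  qed
  also have "\<dots> = \<gamma> * sum x B" by (simp add: sum_distrib_left)
  finally have 3: "cost c D \<le> \<gamma> * sum x B" .
  have 4: "0 \<le> cost c S" unfolding cost_def using S cnn by (intro sum_nonneg) auto
  have X0: "0 \<le> sum x B" using x_nonneg by (simp add: sum_nonneg)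
  have "a * sum x B \<le> a * f D" using 2 a0 by simp
  then have "a * sum x B - \<gamma> * sum x B \<le> a * f S" using 1 3 4 by linarith
  moreover have "\<gamma> * sum x B \<le> (2*a/3) * sum x B" using g X0 by (intro mult_right_mono)
  ultimately have "a * (sum x B / 3) \<le> a * f S" by (simp add: algebra_simps)
  then have fS: "sum x B / 3 \<le> f S" using a0 by simp
  have pu: "principal_utility n f (\<lambda>i. if i\<in>B then a else 0) S = (1 - a * card B) * f S"
    unfolding principal_utility_def using sum_alpha[OF B] by simp
  have "(1/4) * (sum x B / 3) \<le> (1 - a * card B) * f S"
    using aB fS X0 by (intro mult_mono) auto
  then have "sum x B / 12 \<le> principal_utility n f (\<lambda>i. if i\<in>B then a else 0) S" using pu by simp
  moreover have "contract n (\<lambda>i. if i\<in>B then a else 0)" using a0 a1 by (simp add: contract_def)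
  moreover have "equal_pay n (\<lambda>i. if i\<in>B then a else 0)" by (simp add: equal_pay_def)
  ultimately show ?thesis using NE by blast
qed

lemma option_A:
  assumes i: "i < n" and b1: "\<beta> i < 1"
  shows "\<exists>\<alpha> S. contract n \<alpha> \<and> equal_pay n \<alpha> \<and> pure_NE n T own c f \<alpha> S \<and>
           (1 - \<beta> i) * x i / 2 - (f Ss - x i) \<le> principal_utility n f \<alpha> S"
proof -
  define a where "a = (1 + \<beta> i) / 2"
  have b0: "0 \<le> \<beta> i" using bnn i .
  have a0: "0 \<le> a" "a \<le> 1" using b0 b1 by (auto simp: a_def)
  have B: "{i} \<subseteq> {..<n}" using i by auto
  obtain S where S: "S \<subseteq> {j\<in>T. own j \<in> {i}}" and NE: "pure_NE n T own c f (\<lambda>k. if k\<in>{i} then a else 0) S"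
    and mx: "\<forall>D \<subseteq> {j\<in>T. own j \<in> {i}}. a * f D - cost c D \<le> a * f S - cost c S"
    using potential[OF vi vr B a0] by blast
  define D where "D = {j\<in>Ss. own j = i}"
  have DT: "D \<subseteq> {j\<in>T. own j \<in> {i}}" using SsT by (auto simp: D_def)
  have 1: "a * f D - cost c D \<le> a * f S - cost c S" using mx DT by blast
  have SA: "S \<subseteq> actions_of T own i" using S by (auto simp: actions_of_def)
  have "utility T own c f \<beta> i ((Ss - actions_of T own i) \<union> S) \<le> utility T own c f \<beta> i Ss"
    using ne i SA unfolding pure_NE_def by blast
  moreover have "((Ss - actions_of T own i) \<union> S) \<inter> actions_of T own i = S" using SA by blast
  moreover have "Ss \<inter> actions_of T own i = D" using SsT by (auto simp: actions_of_def D_def)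
  ultimately have 2: "\<beta> i * f ((Ss - actions_of T own i) \<union> S) - cost c S \<le> \<beta> i * f Ss - cost c D"
    by (simp add: utility_def)
  have "f S \<le> f ((Ss - actions_of T own i) \<union> S)"
    using SsT SA by (intro fmono) (auto simp: actions_of_def)
  then have "\<beta> i * f S \<le> \<beta> i * f ((Ss - actions_of T own i) \<union> S)" using b0 by (intro mult_left_mono)
  with 1 2 have 3: "(a - \<beta> i) * f S \<ge> a * f D - \<beta> i * f Ss" by (simp add: algebra_simps)
  have xD: "x i \<le> f D" using wle DT unfolding x_def D_def by auto
  have y0: "0 \<le> f Ss - x i"
  proof -
    have "{j\<in>Ss. own j = i} \<subseteq> Ss" by blast
    then have "x i \<le> sum w Ss" unfolding x_def using finSs wnn SsT by (intro sum_mono2) auto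
    then show ?thesis using weq by simp
  qed
  have "a * x i \<le> a * f D" using xD a0 by (intro mult_left_mono)
  with 3 have "(a - \<beta> i) * f S \<ge> (a - \<beta> i) * x i - \<beta> i * (f Ss - x i)" by (simp add: algebra_simps)
  moreover have "\<beta> i * (f Ss - x i) \<le> f Ss - x i" using b0 b1 y0 by (simp add: mult_left_le_one_le)
  moreover have "a - \<beta> i = (1 - \<beta> i) / 2" by (simp add: a_def field_simps)
  ultimately have 4: "(1 - \<beta> i) / 2 * f S \<ge> (1 - \<beta> i) * x i / 2 - (f Ss - x i)" by simp
  have pu: "principal_utility n f (\<lambda>k. if k\<in>{i} then a else 0) S = (1 - a) * f S"
    unfolding principal_utility_def using sum_alpha[OF B, of a] by simp
  have "1 - a = (1 - \<beta> i) / 2" by (simp add: a_def field_simps)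
  with 4 pu have "(1 - \<beta> i) * x i / 2 - (f Ss - x i) \<le> principal_utility n f (\<lambda>k. if k\<in>{i} then a else 0) S"
    by simp
  moreover have "contract n (\<lambda>k. if k\<in>{i} then a else 0)" using a0 by (simp add: contract_def)
  moreover have "equal_pay n (\<lambda>k. if k\<in>{i} then a else 0)" by (simp add: equal_pay_def)
  ultimately show ?thesis using NE by blast
qed

end


context inst
begin

lemma lowpart:
  assumes n: "exp 16 \<le> real n" and Os: "Os \<subseteq> {..<n}" and bO: "\<forall>j\<in>Os. \<beta> j \<le> 1/2"
    and sb: "sum \<beta> Os \<le> 1"
  shows "\<exists>\<alpha> S. contract n \<alpha> \<and> equal_pay n \<alpha> \<and> pure_NE n T own c f \<alpha> S \<and>
           (ln (ln (real n)) / ln (real n)) * sum x Os / 120 \<le> principal_utility n f \<alpha> S"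
proof -
  define \<theta> where "\<theta> = nat \<lfloor>sqrt (ln (real n))\<rfloor>"
  define bc where "bc = nat \<lceil>ln (real n) / ln (real \<theta>)\<rceil>"
  have as: "\<theta> \<ge> 2" "n \<le> \<theta>^bc" "real bc + 1 + 2 * real \<theta> \<le> 10 * ln (real n) / ln (ln (real n))"
    using asym[OF n] unfolding \<theta>_def bc_def by auto
  have finO: "finite Os" using Os finite_subset by blast
  have cO: "card Os \<le> \<theta>^bc" using card_mono[OF _ Os] as(2) by simp
  have bO': "\<forall>j\<in>Os. 0 \<le> \<beta> j \<and> \<beta> j \<le> 1/2" using bO Os bnn by auto
  obtain B b where B: "B \<subseteq> Os" "card B \<le> \<theta>^b" "\<forall>j\<in>B. \<beta> j * (2 * real \<theta>^b) \<le> 1"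
    "sum x Os \<le> (real bc + 1 + 2 * real \<theta>) * sum x B"
    using comb[OF finO as(1) cO bO' sb, of x] x_nonneg by blast
  have tp: "(1::real) \<le> real \<theta>^b" using as(1) by (simp add: one_le_power)
  define a where "a = 3 / (4 * real \<theta>^b)"
  define \<gamma> where "\<gamma> = 1 / (2 * real \<theta>^b)"
  have "(0::real) < real \<theta>^b" using as(1) by simp
  then have a0: "0 < a" by (simp add: a_def)
  have a1: "a \<le> 1" using tp unfolding a_def by (simp add: divide_le_eq)
  have "real (card B) \<le> real \<theta>^b" using B(2) by (metis of_nat_le_iff of_nat_power)
  then have cb: "real (card B) / real \<theta>^b \<le> 1" using tp by (simp add: divide_le_eq)
  have "a * card B = 3/4 * (real (card B) / real \<theta>^b)" by (simp add: a_def)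
  then have aB: "a * card B \<le> 3/4" using cb by simp
  have bg: "\<forall>i\<in>B. \<beta> i \<le> \<gamma>"
  proof
    fix i assume "i \<in> B"
    then have "\<beta> i * (2 * real \<theta>^b) \<le> 1" using B(3) by blast
    moreover have "0 < 2 * real \<theta>^b" using tp by linarith
    ultimately show "\<beta> i \<le> \<gamma>" unfolding \<gamma>_def by (simp add: le_divide_eq)
  qed
  have g: "\<gamma> \<le> 2*a/3" by (simp add: a_def \<gamma>_def)
  obtain \<alpha> S where r: "contract n \<alpha>" "equal_pay n \<alpha>" "pure_NE n T own c f \<alpha> S"
    "sum x B / 12 \<le> principal_utility n f \<alpha> S"
    using good_option[OF _ a0 a1 aB bg g] B(1) Os by blast
  have lam16: "16 \<le> ln (real n)"
    using n by (metis exp_gt_zero less_le_trans ln_exp ln_le_cancel_iff)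
  have lnlam: "0 < ln (ln (real n))" using lam16 by simp
  have XB0: "0 \<le> sum x B" using x_nonneg by (simp add: sum_nonneg)
  have "sum x Os \<le> (10 * ln (real n) / ln (ln (real n))) * sum x B"
    using B(4) as(3) XB0 by (meson mult_right_mono order_trans)
  then have "(ln (ln (real n)) / ln (real n)) * sum x Os
      \<le> (ln (ln (real n)) / ln (real n)) * ((10 * ln (real n) / ln (ln (real n))) * sum x B)"
    using lnlam lam16 by (intro mult_left_mono) auto
  also have "\<dots> = 10 * sum x B" using lnlam lam16 by (simp add: field_simps)
  finally have "(ln (ln (real n)) / ln (real n)) * sum x Os / 120 \<le> sum x B / 12" by simp
  then show ?thesis using r by (meson order_trans)
qed

end

theorem theorem5p3:
  shows "\<exists>C>0. \<exists>N. \<forall>n\<ge>N. \<forall>T own c f \<alpha>s Ss.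
    valid_instance n T own c \<longrightarrow> valid_reward T f \<longrightarrow> XOS T f \<longrightarrow>
    contract n \<alpha>s \<longrightarrow> pure_NE n T own c f \<alpha>s Ss \<longrightarrow>
    (\<exists>\<alpha> S. contract n \<alpha> \<and> equal_pay n \<alpha> \<and> pure_NE n T own c f \<alpha> S \<and>
       principal_utility n f \<alpha> S \<ge>
         C * (ln (ln (real n)) / ln (real n)) * principal_utility n f \<alpha>s Ss)"
proof (intro exI[of _ "1/600"] conjI exI[of _ "nat \<lceil>exp 16\<rceil>"] allI impI)
  show "(0::real) < 1/600" by simp
  fix n T own c f \<alpha>s Ss
  assume nN: "nat \<lceil>exp (16::real)\<rceil> \<le> n" and vi: "valid_instance n T own c" and vr: "valid_reward T f"
    and xos: "XOS T f" and ctr: "contract n \<alpha>s" and ne: "pure_NE n T own c f \<alpha>s Ss"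
  define \<rho> where "\<rho> = ln (ln (real n)) / ln (real n)"
  have n: "exp 16 \<le> real n" using nN by linarith
  have lam16: "16 \<le> ln (real n)"
    using n by (metis exp_gt_zero less_le_trans ln_exp ln_le_cancel_iff)
  have rho0: "0 \<le> \<rho>" using lam16 by (simp add: \<rho>_def)
  have rho1: "\<rho> \<le> 1"
  proof -
    have "ln (ln (real n)) \<le> ln (real n) - 1" using lam16 by (intro ln_le_minus_one) auto
    then show ?thesis using lam16 by (simp add: \<rho>_def)
  qed
  have SsT: "Ss \<subseteq> T" using ne by (simp add: pure_NE_def)
  have fSs0: "0 \<le> f Ss" using vr SsT by (simp add: valid_reward_def)
  have bnn: "\<forall>i<n. 0 \<le> \<alpha>s i" using ctr by (simp add: contract_def)
  define \<Sigma> where "\<Sigma> = (\<Sum>i<n. \<alpha>s i)"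
  have PU: "principal_utility n f \<alpha>s Ss = (1 - \<Sigma>) * f Ss" by (simp add: principal_utility_def \<Sigma>_def)
  show "\<exists>\<alpha> S. contract n \<alpha> \<and> equal_pay n \<alpha> \<and> pure_NE n T own c f \<alpha> S \<and>
       principal_utility n f \<alpha> S \<ge> 1/600 * \<rho> * principal_utility n f \<alpha>s Ss"
    unfolding \<rho>_def[symmetric]
  proof (cases "1 \<le> \<Sigma>")
    case True
    obtain S where S: "S \<subseteq> {j\<in>T. own j \<in> {}}" "pure_NE n T own c f (\<lambda>i. if i\<in>{} then 0 else 0) S"
      using potential[OF vi vr, of "{}" 0] by auto
    have "S = {}" using S(1) by auto
    then have pu0: "principal_utility n f (\<lambda>i. if i\<in>{} then 0 else 0) S = 0"
      using vr by (simp add: principal_utility_def valid_reward_def)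
    have "(1 - \<Sigma>) * f Ss \<le> 0" using True fSs0 by (simp add: mult_nonpos_nonneg)
    then have "1/600 * \<rho> * principal_utility n f \<alpha>s Ss \<le> 0" using PU rho0
      by (simp add: mult_nonneg_nonpos)
    moreover have "contract n (\<lambda>i. if i\<in>{} then 0 else 0)" by (simp add: contract_def)
    moreover have "equal_pay n (\<lambda>i. if i\<in>{} then 0 else 0)" by (simp add: equal_pay_def)
    ultimately show ?thesis using S(2) pu0 by fastforce
  next
    case False
    then have S1: "\<Sigma> < 1" by simp
    obtain L :: "(nat \<Rightarrow> real) set" where L: "finite L" "L \<noteq> {}" "\<forall>w\<in>L. \<forall>j\<in>T. w j \<ge> 0"
      "\<forall>S\<subseteq>T. f S = Max ((\<lambda>w. \<Sum>j\<in>S. w j) ` L)"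
      using xos unfolding XOS_def by blast
    have fin: "finite ((\<lambda>w. \<Sum>j\<in>Ss. w j) ` L)" using L by simp
    obtain w where w: "w \<in> L" "f Ss = sum w Ss"
    proof -
      have ne: "(\<lambda>w. \<Sum>j\<in>Ss. w j) ` L \<noteq> {}" using L(2) by simp
      have "Max ((\<lambda>w. \<Sum>j\<in>Ss. w j) ` L) \<in> (\<lambda>w. \<Sum>j\<in>Ss. w j) ` L"
        using Max_in[OF fin ne] .
      then obtain w where "w \<in> L" "Max ((\<lambda>w. \<Sum>j\<in>Ss. w j) ` L) = sum w Ss" by auto
      moreover have "f Ss = Max ((\<lambda>w. \<Sum>j\<in>Ss. w j) ` L)" using L(4) SsT by blast
      ultimately show ?thesis using that by simp
    qed
    have wle: "\<forall>S\<subseteq>T. sum w S \<le> f S" using L w(1) by auto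
    have wnn: "\<forall>j\<in>T. 0 \<le> w j" using L w(1) by auto
    interpret I: inst n T own c f \<alpha>s Ss w
      using vi vr ctr ne wnn wle w(2) by unfold_locales auto
    have S0: "0 \<le> \<Sigma>" using bnn unfolding \<Sigma>_def by (intro sum_nonneg) auto
    have V: "f Ss = sum I.x {..<n}" by (rule I.V)
    show ?thesis
    proof (cases "\<exists>i<n. \<alpha>s i > 1/2")
      case True
      then obtain i where i: "i < n" "\<alpha>s i > 1/2" by blast
      define Os where "Os = {..<n} - {i}"
      have sumS: "\<Sigma> = \<alpha>s i + sum \<alpha>s Os" unfolding \<Sigma>_def Os_def using i by (simp add: sum.remove)
      have sOs0: "0 \<le> sum \<alpha>s Os" using bnn unfolding Os_def by (intro sum_nonneg) auto
      have bO: "\<forall>j\<in>Os. \<alpha>s j \<le> 1/2"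
      proof
        fix j assume j: "j \<in> Os"
        have "\<alpha>s j \<le> sum \<alpha>s Os" using j bnn by (intro member_le_sum) (auto simp: Os_def)
        then show "\<alpha>s j \<le> 1/2" using sumS S1 i by linarith
      qed
      have sb: "sum \<alpha>s Os \<le> 1" using sumS S1 i by linarith
      have bi1: "\<alpha>s i < 1" using sumS S1 sOs0 by linarith
      define y where "y = sum I.x Os"
      have Vy: "f Ss = I.x i + y" unfolding y_def Os_def V using i by (simp add: sum.remove)
      have x0: "0 \<le> I.x i" by (rule I.x_nonneg)
      have y0: "0 \<le> y" unfolding y_def using I.x_nonneg by (simp add: sum_nonneg)
      have Pb: "(1 - \<Sigma>) * f Ss \<le> (1 - \<alpha>s i) * I.x i + y"
      proof -
        have "(1 - \<Sigma>) * I.x i \<le> (1 - \<alpha>s i) * I.x i" using sumS sOs0 x0 by (intro mult_right_mono) auto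
        moreover have "(1 - \<Sigma>) * y \<le> y" using S0 y0 S1 by (simp add: mult_left_le_one_le)
        ultimately show ?thesis using Vy by (simp add: algebra_simps)
      qed
      have P0: "0 \<le> (1 - \<Sigma>) * f Ss" using S1 fSs0 by simp
      show ?thesis
      proof (cases "y \<le> (1 - \<alpha>s i) * I.x i / 4")
        case True
        obtain \<alpha> S where r: "contract n \<alpha>" "equal_pay n \<alpha>" "pure_NE n T own c f \<alpha> S"
          "(1 - \<alpha>s i) * I.x i / 2 - (f Ss - I.x i) \<le> principal_utility n f \<alpha> S"
          using I.option_A[OF i(1) bi1] by blast
        have "\<rho> * ((1 - \<Sigma>) * f Ss) \<le> 1 * ((1 - \<Sigma>) * f Ss)" using rho1 P0 by (intro mult_right_mono)
        then have h: "\<rho> * ((1 - \<Sigma>) * f Ss) \<le> (5/4) * ((1 - \<alpha>s i) * I.x i)"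
          using Pb True by linarith
        have q0: "0 \<le> (1 - \<alpha>s i) * I.x i" using x0 bi1 by simp
        have e: "1/600 * \<rho> * principal_utility n f \<alpha>s Ss = (1/600) * (\<rho> * ((1 - \<Sigma>) * f Ss))"
          using PU by simp
        have "1/600 * \<rho> * principal_utility n f \<alpha>s Ss \<le> (1 - \<alpha>s i) * I.x i / 4"
          unfolding e using h q0 by linarith
        also have "\<dots> \<le> principal_utility n f \<alpha> S" using r(4) Vy True by simp
        finally show ?thesis using r by blast
      next
        case False
        have Os: "Os \<subseteq> {..<n}" by (auto simp: Os_def)
        obtain \<alpha> S where r: "contract n \<alpha>" "equal_pay n \<alpha>" "pure_NE n T own c f \<alpha> S"
          "\<rho> * sum I.x Os / 120 \<le> principal_utility n f \<alpha> S"
          using I.lowpart[OF n Os bO sb] unfolding \<rho>_def by blast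
        have "(1 - \<Sigma>) * f Ss \<le> 5 * y" using Pb False by simp
        then have "\<rho> * ((1 - \<Sigma>) * f Ss) \<le> \<rho> * (5 * y)" using rho0 by (intro mult_left_mono)
        moreover have "1/600 * \<rho> * principal_utility n f \<alpha>s Ss = (1/600) * (\<rho> * ((1 - \<Sigma>) * f Ss))"
          using PU by simp
        ultimately have "1/600 * \<rho> * principal_utility n f \<alpha>s Ss \<le> \<rho> * y / 120" by linarith
        then show ?thesis using r y_def by (meson order_trans)
      qed
    next
      case False
      have Os: "{..<n} \<subseteq> {..<n}" by simp
      have bO: "\<forall>j\<in>{..<n}. \<alpha>s j \<le> 1/2" using False by auto
      obtain \<alpha> S where r: "contract n \<alpha>" "equal_pay n \<alpha>" "pure_NE n T own c f \<alpha> S"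
          "\<rho> * sum I.x {..<n} / 120 \<le> principal_utility n f \<alpha> S"
        using I.lowpart[OF n Os bO] S1 unfolding \<rho>_def \<Sigma>_def by fastforce
      have "0 \<le> \<Sigma> * f Ss" using S0 fSs0 by simp
      then have "(1 - \<Sigma>) * f Ss \<le> f Ss" by (simp add: algebra_simps)
      then have "\<rho> * ((1 - \<Sigma>) * f Ss) \<le> \<rho> * f Ss" using rho0 by (intro mult_left_mono)
      moreover have "0 \<le> \<rho> * f Ss" using rho0 fSs0 by simp
      moreover have "1/600 * \<rho> * principal_utility n f \<alpha>s Ss = (1/600) * (\<rho> * ((1 - \<Sigma>) * f Ss))"
        using PU by simp
      ultimately have "1/600 * \<rho> * principal_utility n f \<alpha>s Ss \<le> \<rho> * f Ss / 120" by linarith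
      then have "1/600 * \<rho> * principal_utility n f \<alpha>s Ss \<le> principal_utility n f \<alpha> S"
        using r(4) V by simp
      then show ?thesis using r by blast
    qed
  qed
qed

end
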